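(* Let $f(z)=\sum_{n\ge1} f_n z^n$ be a formal power series over $\mathbb{C}$ with $f_1\neq 0$, and let $f'(z)$ be its formal derivative. The Riordan matrix $\left(\frac{z f'(z)}{f(z)}, f(z)\right)$ (an element of the Hitting time subgroup) is a pseudo-involution if and only if $-f(-f(z))=z$.
   Context: A Riordan matrix is a pair $(g(z),f(z))$ of formal power series over $\mathbb{C}$ with $g(z)=\sum_{n\ge 0} g_n z^n$, $g_0\neq 0$, and $f(z)=\sum_{n\ge 1} f_n z^n$ with $f_1\neq 0$; it represents the infinite lower-triangular matrix whose $k$-th column ($k\ge 0$) has generating function $g(z)f(z)^k$. Riordan matrices form a group under matrix multiplication, where $(g(z),f(z))*(h(z),l(z))=(g(z)h(f(z)),\,l(f(z)))$ and the identity is $(1,z)$. Let $M=(1,-z)$. A Riordan matrix $L$ is called a pseudo-involution if $(L*M)*(L*M)=(1,z)$. The quotient $z f'(z)/f(z)$ is the formal power series obtained by cancelling the factor $z$ (it has constant term $1$). *)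

theory Defs
  imports "HOL-Computational_Algebra.Formal_Power_Series"
begin

text \<open>A Riordan matrix is represented by its pair (g, f) of formal power series.\<close>

definition riordan_mult :: "complex fps \<times> complex fps \<Rightarrow> complex fps \<times> complex fps \<Rightarrow> complex fps \<times> complex fps" where
  "riordan_mult p q = (fst p * fps_compose (fst q) (snd p), fps_compose (snd q) (snd p))"

definition riordan_id :: "complex fps \<times> complex fps" where
  "riordan_id = (1, fps_X)"

definition riordan_M :: "complex fps \<times> complex fps" where
  "riordan_M = (1, - fps_X)"

definition pseudo_involution :: "complex fps \<times> complex fps \<Rightarrow> bool" where
  "pseudo_involution L \<longleftrightarrow>
     riordan_mult (riordan_mult L riordan_M) (riordan_mult L riordan_M) = riordan_id"

text \<open>z f'(z) / f(z), computed by cancelling the factor z: f'(z) / (f(z)/z).\<close>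
definition hitting_g :: "complex fps \<Rightarrow> complex fps" where
  "hitting_g f = fps_deriv f / fps_shift 1 f"

end

theory Submission
  imports Defs
begin

theorem proposition19:
  fixes f :: "complex fps"
  assumes "fps_nth f 0 = 0" and "fps_nth f 1 \<noteq> 0"
  shows "pseudo_involution (hitting_g f, f) \<longleftrightarrow>
           - fps_compose f (- f) = fps_X"
proof -
  define g where "g = hitting_g f"
  define s where "s = fps_shift 1 f"
  define h where "h = - f"
  have h0: "fps_nth h 0 = 0" using assms(1) by (simp add: h_def)
  have s0: "fps_nth s 0 \<noteq> 0" using assms(2) by (simp add: s_def)
  have fs: "f = s * fps_X"
  proof -
    have "f \<noteq> 0" using assms(2) by auto
    hence "1 \<le> subdegree f" using assms(1) by (intro subdegree_geI) auto
    thus ?thesis unfolding s_def by (rule fps_shift_times_fps_X[symmetric])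
  qed
  have gs: "g * s = fps_deriv f"
  proof -
    have "g = fps_deriv f * inverse s" unfolding g_def hitting_g_def s_def[symmetric]
      using s0 by (rule fps_divide_unit)
    thus ?thesis using s0 by (simp add: mult.assoc inverse_mult_eq_1)
  qed
  have LM: "riordan_mult (g, f) riordan_M = (g, h)"
    using assms(1) by (simp add: riordan_mult_def riordan_M_def fps_compose_uminus h_def)
  have PI: "pseudo_involution (g, f) \<longleftrightarrow> g * (g oo h) = 1 \<and> h oo h = fps_X"
    unfolding pseudo_involution_def LM by (simp add: riordan_mult_def riordan_id_def)
  have hh: "h oo h = fps_X \<longleftrightarrow> - fps_compose f (- f) = fps_X"
    by (simp add: h_def fps_compose_uminus)
  show ?thesis
    unfolding g_def[symmetric] PI hh
  proof
    assume "- fps_compose f (- f) = fps_X"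
    hence hX: "h oo h = fps_X" using hh by simp
    have d: "fps_deriv f * (fps_deriv f oo h) = 1"
    proof -
      have "fps_deriv (h oo h) = (fps_deriv h oo h) * fps_deriv h"
        using h0 by (rule fps_compose_deriv)
      hence "1 = (fps_deriv h oo h) * fps_deriv h" using hX by simp
      thus ?thesis by (simp add: h_def fps_compose_uminus mult.commute)
    qed
    have ss: "s * (s oo h) = 1"
    proof -
      have e1: "f oo h = (s oo h) * h"
        using h0 by (simp add: fs fps_compose_mult_distrib)
      have "f oo h = - fps_X" using \<open>- fps_compose f (- f) = fps_X\<close> unfolding h_def
        by (metis minus_minus)
      with e1 have "- fps_X = (s oo h) * (- (s * fps_X))" by (simp add: h_def fs)
      hence "fps_X * 1 = fps_X * (s * (s oo h))" by (simp add: algebra_simps)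
      thus ?thesis by (subst (asm) mult_left_cancel) (auto simp: fps_X_neq_zero)
    qed
    have "(g oo h) * (s oo h) = fps_deriv f oo h"
      using h0 by (simp add: gs[symmetric] fps_compose_mult_distrib)
    hence "g * (g oo h) * (s * (s oo h)) = fps_deriv f * (fps_deriv f oo h)"
      by (simp add: gs[symmetric] algebra_simps)
    thus "g * (g oo h) = 1 \<and> - fps_compose f (- f) = fps_X"
      using d ss \<open>- fps_compose f (- f) = fps_X\<close> by simp
  qed simp
qed

end
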